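(* Let $\varepsilon\in[0,1)$ and let $\rho',\tau'\in\mathcal{D}(P')$ be density operators. Let $\mathcal{P},\mathcal{E}\subseteq\mathcal{D}(P)$ satisfy $\operatorname{conv}(\mathcal{P})\cap\operatorname{aff}(\mathcal{E})\neq\emptyset$. Then there exists a linear map $\mathcal{L}$ from operators on $P$ to operators on $P'$ such that, for every $\rho\in\mathcal{P}$ and every $\tau\in\mathcal{E}$, $T(\mathcal{L}(\rho),\rho')\le\varepsilon$ and $\mathcal{L}(\tau)=\tau'$ (i.e. the conversion $(\mathcal{P},\mathcal{E})\xrightarrow{\mathcal{L},\varepsilon}(\rho',\tau')$ is achievable by some Gibbs-preserving linear map) if and only if $\varepsilon\ge T(\rho',\tau')$.
   Context: All Hilbert spaces are finite-dimensional; $\mathcal{D}(P)$ is the set of density operators on system $P$. The trace distance is $T(X,Y)=\tfrac12\|X-Y\|_1$. $\operatorname{conv}(\mathcal{P})$ is the convex hull and $\operatorname{aff}(\mathcal{E})=\{\sum_i a_i\tau_i:\tau_i\in\mathcal{E},a_i\in\mathbb{R},\sum_i a_i=1\}$ the affine hull. An uncertain athermal state is a pair of sets $(\mathcal{P},\mathcal{E})$ of candidate nonequilibrium and equilibrium (Gibbs) states. For a map $\mathcal{F}$, the conversion $(\mathcal{P},\mathcal{E})\xrightarrow{\mathcal{F},\varepsilon}(\mathcal{P}',\mathcal{E}')$ means: for every $(\rho,\tau)\in\mathcal{P}\times\mathcal{E}$ there exists $(\rho',\tau')\in\mathcal{P}'\times\mathcal{E}'$ with $T(\mathcal{F}(\rho),\rho')\le\varepsilon$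 and $\mathcal{F}(\tau)=\tau'$; singleton sets are identified with their element. The class GPL (Gibbs-preserving linear maps) consists of all linear maps sending the input Gibbs state to the output Gibbs state; in this framework that requirement is precisely the condition $\mathcal{F}(\tau)=\tau'$ in the conversion. *)

theory Defs
  imports "Jordan_Normal_Form.Matrix" "Jordan_Normal_Form.Char_Poly"
begin

(* Operators on a d-dimensional Hilbert space P are complex d x d matrices (carrier_mat d d). *)

definition adj_mat :: "complex mat \<Rightarrow> complex mat" where
  "adj_mat A = mat (dim_col A) (dim_row A) (\<lambda>(i,j). cnj (A $$ (j,i)))"

definition mtrace :: "complex mat \<Rightarrow> complex" where
  "mtrace A = (\<Sum>i<dim_row A. A $$ (i,i))"

definition hermitian_mat :: "complex mat \<Rightarrow> bool" where
  "hermitian_mat A \<longleftrightarrow> A = adj_mat A"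

definition psd_mat :: "nat \<Rightarrow> complex mat \<Rightarrow> bool" where
  "psd_mat d A \<longleftrightarrow> (\<forall>v :: nat \<Rightarrow> complex.
     \<exists>r::real. r \<ge> 0 \<and> (\<Sum>i<d. \<Sum>j<d. cnj (v i) * A $$ (i,j) * v j) = complex_of_real r)"

definition density_ops :: "nat \<Rightarrow> complex mat set" where
  "density_ops d = {A. A \<in> carrier_mat d d \<and> hermitian_mat A \<and> psd_mat d A \<and> mtrace A = 1}"

(* the eigenvalues (with multiplicity) of a square complex matrix, as a list of roots of
   the characteristic polynomial; the multiset is unique, so sums over it are well defined *)
definition eigvals_list :: "complex mat \<Rightarrow> complex list" where
  "eigvals_list A = (SOME as. char_poly A = (\<Prod>a\<leftarrow>as. [:- a, 1:]) \<and> length as = dim_row A)"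

(* trace norm ||X||_1 = tr sqrt(X^dagger X) = sum of square roots of eigenvalues of X^dagger X *)
definition trace_norm :: "complex mat \<Rightarrow> real" where
  "trace_norm X = sum_list (map (\<lambda>a. sqrt (Re a)) (eigvals_list (adj_mat X * X)))"

definition trace_dist :: "complex mat \<Rightarrow> complex mat \<Rightarrow> real" where
  "trace_dist X Y = trace_norm (X - Y) / 2"

fun lin_comb :: "nat \<Rightarrow> (nat \<Rightarrow> real) \<Rightarrow> (nat \<Rightarrow> complex mat) \<Rightarrow> nat \<Rightarrow> complex mat" where
  "lin_comb d c x 0 = 0\<^sub>m d d"
| "lin_comb d c x (Suc k) = lin_comb d c x k + complex_of_real (c k) \<cdot>\<^sub>m x k"

definition conv_mat :: "nat \<Rightarrow> complex mat set \<Rightarrow> complex mat set" where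
  "conv_mat d S = {M. \<exists>k c x. (\<forall>i<k. x i \<in> S \<and> c i \<ge> 0) \<and> (\<Sum>i<k. c i) = 1
                              \<and> M = lin_comb d c x k}"

definition aff_mat :: "nat \<Rightarrow> complex mat set \<Rightarrow> complex mat set" where
  "aff_mat d S = {M. \<exists>k c x. (\<forall>i<k. x i \<in> S) \<and> (\<Sum>i<k. c i) = 1
                              \<and> M = lin_comb d c x k}"

definition linear_op_map :: "nat \<Rightarrow> nat \<Rightarrow> (complex mat \<Rightarrow> complex mat) \<Rightarrow> bool" where
  "linear_op_map d d' L \<longleftrightarrow>
     (\<forall>X \<in> carrier_mat d d. L X \<in> carrier_mat d' d') \<and>
     (\<forall>X \<in> carrier_mat d d. \<forall>Y \<in> carrier_mat d d. L (X + Y) = L X + L Y) \<and>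
     (\<forall>a. \<forall>X \<in> carrier_mat d d. L (a \<cdot>\<^sub>m X) = a \<cdot>\<^sub>m L X)"

end

theory Submission imports Defs "Jordan_Normal_Form.Schur_Decomposition" begin
hide_const (open) Determinant.adj_mat

lemma sq_mult_carrier[simp]: "A \<in> carrier_mat n n \<Longrightarrow> B \<in> carrier_mat n n \<Longrightarrow> A * B \<in> carrier_mat n n"
  by (rule mult_carrier_mat)

lemma adj_dim[simp]: "dim_row (adj_mat A) = dim_col A" "dim_col (adj_mat A) = dim_row A"
  unfolding adj_mat_def by simp_all
lemma adj_carrier[simp]: "A \<in> carrier_mat m n \<Longrightarrow> adj_mat A \<in> carrier_mat n m"
  unfolding carrier_mat_def by simp
lemma adj_index[simp]: "i < dim_col A \<Longrightarrow> j < dim_row A \<Longrightarrow> adj_mat A $$ (i,j) = cnj (A $$ (j,i))"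
  unfolding adj_mat_def by simp
lemma adj_adj[simp]: "adj_mat (adj_mat A) = A"
  by (rule eq_matI) simp_all
lemma cnj_sum: "cnj (sum f S) = sum (\<lambda>x. cnj (f x)) S" by (rule cnj_sum)
lemma adj_mult: "A \<in> carrier_mat m n \<Longrightarrow> B \<in> carrier_mat n p \<Longrightarrow> adj_mat (A * B) = adj_mat B * adj_mat A"
  by (rule eq_matI) (auto simp: scalar_prod_def cnj_sum mult.commute intro: sum.cong)

lemma cdot_self_real: fixes w :: "complex vec"
  shows "w \<bullet>c w = complex_of_real (\<Sum>k<dim_vec w. (cmod (w $ k))^2)"
proof -
  have "w \<bullet>c w = (\<Sum>k\<in>{0..<dim_vec w}. w $ k * cnj (w $ k))"
    unfolding scalar_prod_def by simp
  also have "\<dots> = (\<Sum>k<dim_vec w. complex_of_real ((cmod (w $ k))^2))"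
    apply (rule sum.cong) apply (simp add: atLeast0LessThan) apply (rule complex_norm_square[symmetric]) done
  finally show ?thesis by simp
qed

lemma unitary_first_col:
  fixes v :: "complex vec"
  assumes v: "v \<in> carrier_vec n" and v0: "v \<noteq> 0\<^sub>v n"
  shows "\<exists>W \<in> carrier_mat n n. adj_mat W * W = 1\<^sub>m n \<and> (\<exists>c. col W 0 = c \<cdot>\<^sub>v v)"
proof -
  interpret cof_vec_space n "TYPE(complex)" .
  define b where "b = basis_completion v"
  from basis_completion[OF v v0, folded b_def]
  have b: "set b \<subseteq> carrier_vec n" and dist_b: "distinct b" 
    and indep: "\<not> lin_dep (set b)" and hdb: "hd b = v" 
    and len_b: "length b = n" by auto
  have n: "n > 0" using v v0 by (cases n) (auto intro!: eq_vecI)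
  from hdb len_b n obtain vs where bv: "b = v # vs" by (cases b, auto)
  define ws where "ws = gram_schmidt n b"
  from gram_schmidt_result[OF b dist_b indep ws_def]
  have ws: "set ws \<subseteq> carrier_vec n" "corthogonal ws" "length ws = n" 
    by (auto simp: len_b)
  have hdws: "hd ws = v" unfolding ws_def bv using gram_schmidt_hd[OF v] by simp
  define r where "r = (\<lambda>w::complex vec. \<Sum>k<dim_vec w. (cmod (w $ k))^2)"
  define ws' where "ws' = map (\<lambda>w. complex_of_real (1 / sqrt (r w)) \<cdot>\<^sub>v w) ws"
  define W where "W = mat_of_cols n ws'"
  have ws'_len: "length ws' = n" using ws unfolding ws'_def by simp
  have wsi: "i < n \<Longrightarrow> ws ! i \<in> carrier_vec n" for i using ws by auto
  have ws'i: "i < n \<Longrightarrow> ws' ! i = complex_of_real (1 / sqrt (r (ws ! i))) \<cdot>\<^sub>v (ws ! i)" for i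
    using ws unfolding ws'_def by simp
  have W: "W \<in> carrier_mat n n" unfolding W_def using ws'_len by (metis mat_of_cols_carrier(1))
  have Wij: "i < n \<Longrightarrow> j < n \<Longrightarrow> W $$ (i,j) = complex_of_real (1 / sqrt (r (ws ! j))) * (ws ! j) $ i" for i j
  proof -
    assume i: "i < n" and j: "j < n"
    have "W $$ (i,j) = (ws' ! j) $ i" unfolding W_def mat_of_cols_def using i j ws'_len by simp
    also have "\<dots> = complex_of_real (1 / sqrt (r (ws ! j))) * (ws ! j) $ i"
      unfolding ws'i[OF j] using wsi[OF j] i by simp
    finally show ?thesis .
  qed
  have rpos: "i < n \<Longrightarrow> r (ws ! i) > 0" for i
  proof -
    assume i: "i < n"
    have nz: "ws ! i \<bullet>c ws ! i \<noteq> 0" using ws(2) ws(3) i by (auto simp: corthogonal_def)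
    have "complex_of_real (r (ws ! i)) \<noteq> 0" using nz cdot_self_real[of "ws ! i"] unfolding r_def by metis
    hence "r (ws ! i) \<noteq> 0" by simp
    moreover have "r (ws ! i) \<ge> 0" unfolding r_def by (intro sum_nonneg) auto
    ultimately show ?thesis by simp
  qed
  have "adj_mat W * W = 1\<^sub>m n"
  proof (rule eq_matI)
    fix i j assume i: "i < dim_row (1\<^sub>m n :: complex mat)" and j: "j < dim_col (1\<^sub>m n :: complex mat)"
    hence i: "i < n" and j: "j < n" by auto
    have "(adj_mat W * W) $$ (i,j) = (\<Sum>k<n. cnj (W $$ (k,i)) * W $$ (k,j))"
      using W i j by (simp add: scalar_prod_def atLeast0LessThan)
    also have "\<dots> = (\<Sum>k<n. complex_of_real (1 / sqrt (r (ws ! i))) * complex_of_real (1 / sqrt (r (ws ! j))) * ((ws ! j) $ k * cnj ((ws ! i) $ k)))"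
      by (rule sum.cong, simp, simp add: Wij i j)
    also have "\<dots> = complex_of_real (1 / sqrt (r (ws ! i))) * complex_of_real (1 / sqrt (r (ws ! j))) * (ws ! j \<bullet>c ws ! i)"
      using wsi[OF i] wsi[OF j] by (simp add: scalar_prod_def sum_distrib_left atLeast0LessThan)
    also have "\<dots> = 1\<^sub>m n $$ (i,j)"
    proof (cases "i = j")
      case True
      have "ws ! j \<bullet>c ws ! i = complex_of_real (r (ws ! i))" using True cdot_self_real[of "ws ! i"] unfolding r_def by metis
      moreover have "1 / sqrt (r (ws ! i)) * (1 / sqrt (r (ws ! i))) * r (ws ! i) = 1"
        using rpos[OF i] by (simp add: field_simps)
      ultimately show ?thesis using True i
        by (simp del: of_real_divide of_real_mult add: of_real_mult[symmetric])
    next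
      case False
      have "ws ! j \<bullet>c ws ! i = 0" using ws(2) ws(3) i j False by (auto simp: corthogonal_def)
      thus ?thesis using False i j by simp
    qed
    finally show "(adj_mat W * W) $$ (i,j) = 1\<^sub>m n $$ (i,j)" .
  qed (use W in auto)
  moreover have "col W 0 = complex_of_real (1 / sqrt (r (ws ! 0))) \<cdot>\<^sub>v v"
  proof -
    have "ws ! 0 = v" using hdws ws(3) n by (cases ws) auto
    thus ?thesis unfolding W_def using col_mat_of_cols[of 0 ws' n] ws'_len n ws'i[of 0] v by simp
  qed
  ultimately show ?thesis using W by blast
qed

lemma adj_one[simp]: "adj_mat (1\<^sub>m n) = 1\<^sub>m n"
  by (rule eq_matI) auto
lemma adj_zero[simp]: "adj_mat (0\<^sub>m n m) = 0\<^sub>m m n"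
  by (rule eq_matI) auto

lemma adj_four_block:
  assumes "A \<in> carrier_mat 1 1" "D \<in> carrier_mat m m"
  shows "adj_mat (four_block_mat A (0\<^sub>m 1 m) (0\<^sub>m m 1) D) = four_block_mat (adj_mat A) (0\<^sub>m 1 m) (0\<^sub>m m 1) (adj_mat D)"
  by (rule eq_matI) (use assms in auto)

lemma spectral:
  assumes "A \<in> carrier_mat n n" "hermitian_mat A"
  shows "\<exists>P\<in>carrier_mat n n. adj_mat P * P = 1\<^sub>m n \<and> diagonal_mat (adj_mat P * A * P)"
  using assms
proof (induction n arbitrary: A)
  case 0
  show ?case by (rule bexI[of _ "1\<^sub>m 0"]) (auto simp: diagonal_mat_def)
next
  case (Suc m)
  let ?n = "Suc m"
  have A: "A \<in> carrier_mat ?n ?n" and hA: "adj_mat A = A" using Suc.prems by (auto simp: hermitian_mat_def)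
  from char_poly_factorized[OF A] obtain as where cp: "char_poly A = (\<Prod>a\<leftarrow>as. [:- a, 1:])" and las: "length as = ?n" by auto
  then obtain e as' where as: "as = e # as'" by (cases as) auto
  have "poly (char_poly A) e = 0" unfolding cp as by simp
  hence ev: "eigenvalue A e" using eigenvalue_root_char_poly[OF A] by simp
  define v where "v = find_eigenvector A e"
  from find_eigenvector[OF A ev] have "eigenvector A v e" unfolding v_def .
  hence v: "v \<in> carrier_vec ?n" and v0: "v \<noteq> 0\<^sub>v ?n" and Av: "A *\<^sub>v v = e \<cdot>\<^sub>v v"
    using A unfolding eigenvector_def by auto
  from unitary_first_col[OF v v0] obtain W c where W: "W \<in> carrier_mat ?n ?n" and WW: "adj_mat W * W = 1\<^sub>m ?n"
    and cW: "col W 0 = c \<cdot>\<^sub>v v" by blast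
  have aW: "adj_mat W \<in> carrier_mat ?n ?n" using W by simp
  define B where "B = adj_mat W * A * W"
  have B: "B \<in> carrier_mat ?n ?n" unfolding B_def using W A by simp
  have hB: "adj_mat B = B"
  proof -
    have "adj_mat B = adj_mat W * adj_mat (adj_mat W * A)" unfolding B_def
      by (rule adj_mult[OF _ W]) (use aW A in \<open>rule sq_mult_carrier\<close>)
    also have "\<dots> = adj_mat W * (adj_mat A * W)" using adj_mult[OF aW A] by simp
    also have "\<dots> = B" unfolding B_def hA using assoc_mult_mat[OF aW A W] by simp
    finally show ?thesis .
  qed
  have colB: "col B 0 = e \<cdot>\<^sub>v unit_vec ?n 0"
  proof -
    have "col B 0 = (adj_mat W * A) *\<^sub>v col W 0" unfolding B_def using col_mult2[of "adj_mat W * A" ?n ?n W ?n 0] aW A W by (simp del: assoc_mult_mat)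
    also have "\<dots> = (adj_mat W * A) *\<^sub>v (c \<cdot>\<^sub>v v)" using cW by simp
    also have "\<dots> = c \<cdot>\<^sub>v ((adj_mat W * A) *\<^sub>v v)" using mult_mat_vec[of "adj_mat W * A" ?n ?n v c] aW A v by simp
    also have "(adj_mat W * A) *\<^sub>v v = adj_mat W *\<^sub>v (e \<cdot>\<^sub>v v)" using assoc_mult_mat_vec[OF aW A v] Av by simp
    also have "\<dots> = e \<cdot>\<^sub>v (adj_mat W *\<^sub>v v)" using mult_mat_vec[OF aW v] by simp
    also have "c \<cdot>\<^sub>v (e \<cdot>\<^sub>v (adj_mat W *\<^sub>v v)) = e \<cdot>\<^sub>v (adj_mat W *\<^sub>v (c \<cdot>\<^sub>v v))"
      using mult_mat_vec[OF aW v] aW by (auto simp: smult_smult_assoc mult.commute)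
    also have "adj_mat W *\<^sub>v (c \<cdot>\<^sub>v v) = col (adj_mat W * W) 0" using col_mult2[OF aW W, of 0] cW by simp
    also have "\<dots> = unit_vec ?n 0" using WW by simp
    finally show ?thesis .
  qed
  have Bi0: "i < ?n \<Longrightarrow> B $$ (i,0) = (if i = 0 then e else 0)" for i
  proof -
    assume i: "i < ?n"
    have "B $$ (i,0) = col B 0 $ i" using B i by simp
    thus ?thesis unfolding colB using i by simp
  qed
  have B0j: "j < ?n \<Longrightarrow> B $$ (0,j) = (if j = 0 then e else 0)" for j
  proof -
    assume j: "j < ?n"
    have "B $$ (0,j) = adj_mat B $$ (0,j)" using hB by simp
    also have "\<dots> = cnj (B $$ (j,0))" using B j by simp
    finally have eq: "B $$ (0,j) = cnj (B $$ (j,0))" .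
    show ?thesis
    proof (cases "j = 0")
      case True
      have "B $$ (0,0) = e" using Bi0[of 0] by simp
      thus ?thesis using True by simp
    next
      case False thus ?thesis using eq Bi0[OF j] by simp
    qed
  qed
  define B3 where "B3 = mat m m (\<lambda>(i,j). B $$ (Suc i, Suc j))"
  have B3: "B3 \<in> carrier_mat m m" unfolding B3_def by simp
  have hB3: "hermitian_mat B3" unfolding hermitian_mat_def
  proof (rule eq_matI)
    fix i j assume "i < dim_row (adj_mat B3)" "j < dim_col (adj_mat B3)"
    hence i: "i < m" and j: "j < m" using B3 by auto
    have "B $$ (Suc i, Suc j) = adj_mat B $$ (Suc i, Suc j)" using hB by simp
    also have "\<dots> = cnj (B $$ (Suc j, Suc i))" using B i j by simp
    finally show "B3 $$ (i,j) = adj_mat B3 $$ (i,j)" unfolding B3_def using i j by simp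
  qed (use B3 in auto)
  from Suc.IH[OF B3 hB3] obtain P3 where P3: "P3 \<in> carrier_mat m m" and PP3: "adj_mat P3 * P3 = 1\<^sub>m m"
    and dP3: "diagonal_mat (adj_mat P3 * B3 * P3)" by blast
  define E where "E = mat 1 1 (\<lambda>_. e)"
  have E: "E \<in> carrier_mat 1 1" unfolding E_def by simp
  have Bblock: "B = four_block_mat E (0\<^sub>m 1 m) (0\<^sub>m m 1) B3"
  proof (rule eq_matI)
    fix i j assume "i < dim_row (four_block_mat E (0\<^sub>m 1 m) (0\<^sub>m m 1) B3)" "j < dim_col (four_block_mat E (0\<^sub>m 1 m) (0\<^sub>m m 1) B3)"
    hence i: "i < ?n" and j: "j < ?n" using E B3 by auto
    show "B $$ (i,j) = four_block_mat E (0\<^sub>m 1 m) (0\<^sub>m m 1) B3 $$ (i,j)"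
    proof (cases "i = 0 \<or> j = 0")
      case True thus ?thesis using Bi0[OF i] B0j[OF j] i j E B3 by (auto simp: E_def)
    next
      case False
      then obtain i' j' where "i = Suc i'" "j = Suc j'" by (cases i; cases j) auto
      thus ?thesis using i j E B3 by (simp add: B3_def)
    qed
  qed (use B E B3 in auto)
  define F where "F = four_block_mat (1\<^sub>m 1) (0\<^sub>m 1 m) (0\<^sub>m m 1) P3"
  have F: "F \<in> carrier_mat ?n ?n" unfolding F_def using P3 by auto
  have aF: "adj_mat F = four_block_mat (1\<^sub>m 1) (0\<^sub>m 1 m) (0\<^sub>m m 1) (adj_mat P3)"
    unfolding F_def using adj_four_block[OF one_carrier_mat P3] by simp
  have aP3: "adj_mat P3 \<in> carrier_mat m m" using P3 by simp
  have dims: "dim_row P3 = m" "dim_col P3 = m" "dim_row B3 = m" "dim_col B3 = m" "dim_row E = 1" "dim_col E = 1"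
    using P3 B3 E by auto
  have FF: "adj_mat F * F = 1\<^sub>m ?n"
  proof -
    have "adj_mat F * F = four_block_mat (1\<^sub>m 1 * 1\<^sub>m 1 + 0\<^sub>m 1 m * 0\<^sub>m m 1) (1\<^sub>m 1 * 0\<^sub>m 1 m + 0\<^sub>m 1 m * P3)
      (0\<^sub>m m 1 * 1\<^sub>m 1 + adj_mat P3 * 0\<^sub>m m 1) (0\<^sub>m m 1 * 0\<^sub>m 1 m + adj_mat P3 * P3)"
      unfolding aF by (unfold F_def, rule mult_four_block_mat) (use P3 aP3 in auto)
    also have "\<dots> = four_block_mat (1\<^sub>m 1) (0\<^sub>m 1 m) (0\<^sub>m m 1) (1\<^sub>m m)"
      using P3 aP3 PP3 by (simp add: dims)
    finally show ?thesis by simp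
  qed
  have FBF: "adj_mat F * B * F = four_block_mat (E) (0\<^sub>m 1 m) (0\<^sub>m m 1) (adj_mat P3 * B3 * P3)"
  proof -
    have "adj_mat F * B = four_block_mat (1\<^sub>m 1 * E + 0\<^sub>m 1 m * 0\<^sub>m m 1) (1\<^sub>m 1 * 0\<^sub>m 1 m + 0\<^sub>m 1 m * B3)
      (0\<^sub>m m 1 * E + adj_mat P3 * 0\<^sub>m m 1) (0\<^sub>m m 1 * 0\<^sub>m 1 m + adj_mat P3 * B3)"
      unfolding aF Bblock by (rule mult_four_block_mat) (use E B3 aP3 in auto)
    also have "\<dots> = four_block_mat E (0\<^sub>m 1 m) (0\<^sub>m m 1) (adj_mat P3 * B3)"
      using E B3 aP3 by (simp add: dims)
    finally have 1: "adj_mat F * B = four_block_mat E (0\<^sub>m 1 m) (0\<^sub>m m 1) (adj_mat P3 * B3)" .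
    have "four_block_mat E (0\<^sub>m 1 m) (0\<^sub>m m 1) (adj_mat P3 * B3) * F = 
       four_block_mat (E * 1\<^sub>m 1 + 0\<^sub>m 1 m * 0\<^sub>m m 1) (E * 0\<^sub>m 1 m + 0\<^sub>m 1 m * P3)
      (0\<^sub>m m 1 * 1\<^sub>m 1 + (adj_mat P3 * B3) * 0\<^sub>m m 1) (0\<^sub>m m 1 * 0\<^sub>m 1 m + (adj_mat P3 * B3) * P3)"
      unfolding F_def by (rule mult_four_block_mat) (use E B3 aP3 P3 in auto)
    also have "\<dots> = four_block_mat E (0\<^sub>m 1 m) (0\<^sub>m m 1) (adj_mat P3 * B3 * P3)"
      using E B3 aP3 P3 by (simp add: dims)
    finally show ?thesis using 1 by simp
  qed
  define P where "P = W * F"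
  have P: "P \<in> carrier_mat ?n ?n" unfolding P_def using W F by simp
  have aP: "adj_mat P = adj_mat F * adj_mat W" unfolding P_def using adj_mult[OF W F] .
  have aF': "adj_mat F \<in> carrier_mat ?n ?n" using F by simp
  have WF: "W * F \<in> carrier_mat ?n ?n" using W F by simp
  have "adj_mat P * P = (adj_mat F * adj_mat W) * (W * F)" using aP P_def by simp
  also have "\<dots> = adj_mat F * (adj_mat W * (W * F))" using assoc_mult_mat[OF aF' aW WF] .
  also have "adj_mat W * (W * F) = (adj_mat W * W) * F" using assoc_mult_mat[OF aW W F] by simp
  finally have PP: "adj_mat P * P = 1\<^sub>m ?n" using WW FF F by simp
  have AWF: "A * (W * F) = (A * W) * F" using assoc_mult_mat[OF A W F] by simp
  have "adj_mat P * A * P = (adj_mat F * adj_mat W) * A * (W * F)" using aP P_def by simp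
  also have "\<dots> = adj_mat F * (adj_mat W * A * W) * F"
    using aF' aW A W F by (simp add: assoc_mult_mat[of _ ?n ?n _ ?n _ ?n])
  finally have "adj_mat P * A * P = adj_mat F * B * F" unfolding B_def .
  hence "diagonal_mat (adj_mat P * A * P)"
    unfolding FBF diagonal_mat_def using dP3 E P3 aP3 B3 
    by (auto simp: diagonal_mat_def E_def)
  thus ?case using P PP by blast
qed

lemma count_indicator_sum: "sum_list (map (\<lambda>a. if a = x then 1 else 0) as) = count (mset as) x"
  by (induction as) auto

lemma lin_factors_unique:
  fixes as bs :: "complex list"
  assumes "(\<Prod>a\<leftarrow>as. [:- a, 1:]) = (\<Prod>a\<leftarrow>bs. [:- a, 1:])"
  shows "mset as = mset bs"
proof (rule multiset_eqI)
  fix x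
  have ord: "Polynomial.order x (\<Prod>a\<leftarrow>cs. [:- a, 1:]) = count (mset cs) x" for cs :: "complex list"
  proof -
    have "Polynomial.order x (\<Prod>a\<leftarrow>cs. [:- a, 1:]) = sum_list (map (Polynomial.order x) (map (\<lambda>a. [:- a, 1:]) cs))"
      by (rule order_prod_list) auto
    also have "\<dots> = sum_list (map (\<lambda>a. if a = x then 1 else 0) cs)"
      by (simp add: o_def order_linear')
    finally show ?thesis using count_indicator_sum by simp
  qed
  show "count (mset as) x = count (mset bs) x" using ord[of as] ord[of bs] assms by simp
qed

lemma diag_sum_list: "sum_list (map f (diag_mat D)) = (\<Sum>k<dim_row D. f (D $$ (k,k)))"
  unfolding diag_mat_def by (simp add: sum_list_distinct_conv_sum_set atLeast0LessThan[symmetric] o_def)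

lemma tn_formula:
  assumes X: "X \<in> carrier_mat n n"
  shows "\<exists>P\<in>carrier_mat n n. adj_mat P * P = 1\<^sub>m n \<and> P * adj_mat P = 1\<^sub>m n \<and>
     diagonal_mat (adj_mat (X * P) * (X * P)) \<and>
     trace_norm X = (\<Sum>k<n. sqrt (Re ((adj_mat (X * P) * (X * P)) $$ (k,k))))"
proof -
  define H where "H = adj_mat X * X"
  have aX: "adj_mat X \<in> carrier_mat n n" using X by simp
  have H: "H \<in> carrier_mat n n" unfolding H_def using X aX by simp
  have hH: "hermitian_mat H" unfolding hermitian_mat_def H_def using adj_mult[OF aX X] by simp
  from spectral[OF H hH] obtain P where P: "P \<in> carrier_mat n n" and PP: "adj_mat P * P = 1\<^sub>m n"
    and dg: "diagonal_mat (adj_mat P * H * P)" by blast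
  have aP: "adj_mat P \<in> carrier_mat n n" using P by simp
  have PP': "P * adj_mat P = 1\<^sub>m n" using mat_mult_left_right_inverse[OF aP P PP] .
  define D where "D = adj_mat P * H * P"
  have D: "D \<in> carrier_mat n n" unfolding D_def using aP H P by simp
  have XP: "X * P \<in> carrier_mat n n" using X P by simp
  have DXP: "D = adj_mat (X * P) * (X * P)"
  proof -
    have "adj_mat (X * P) * (X * P) = (adj_mat P * adj_mat X) * (X * P)" using adj_mult[OF X P] by simp
    also have "\<dots> = adj_mat P * H * P" unfolding H_def
      using aP aX X P by (simp add: assoc_mult_mat[of _ n n _ n _ n])
    finally show ?thesis unfolding D_def by simp
  qed
  have sim: "similar_mat H D" unfolding similar_mat_def
  proof (intro exI)
    have "P * D * adj_mat P = (P * adj_mat P) * H * (P * adj_mat P)" unfolding D_def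
      using aP H P by (simp add: assoc_mult_mat[of _ n n _ n _ n])
    hence "H = P * D * adj_mat P" using PP' H by simp
    thus "similar_mat_wit H D P (adj_mat P)" unfolding similar_mat_wit_def Let_def
      using H D P aP PP PP' assoc_mult_mat[OF P D aP] by (simp add: carrier_matD)
  qed
  have ut: "upper_triangular D" using dg D unfolding D_def diagonal_mat_def upper_triangular_def by auto
  have cpD: "char_poly H = (\<Prod>a\<leftarrow>diag_mat D. [:- a, 1:])"
    using char_poly_similar[OF sim] char_poly_upper_triangular[OF D ut] by simp
  have ex: "\<exists>as. char_poly H = (\<Prod>a\<leftarrow>as. [:- a, 1:]) \<and> length as = dim_row H"
    using char_poly_factorized[OF H] H by simp
  define as where "as = eigvals_list H"
  have "char_poly H = (\<Prod>a\<leftarrow>as. [:- a, 1:]) \<and> length as = dim_row H"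
    unfolding as_def eigvals_list_def by (rule someI_ex[OF ex])
  hence "mset as = mset (diag_mat D)" using cpD lin_factors_unique by metis
  hence "sum_list (map (\<lambda>a. sqrt (Re a)) as) = sum_list (map (\<lambda>a. sqrt (Re a)) (diag_mat D))"
    by (metis mset_map sum_mset_sum_list)
  hence "trace_norm X = (\<Sum>k<n. sqrt (Re (D $$ (k,k))))"
    unfolding trace_norm_def H_def[symmetric] as_def[symmetric] diag_sum_list using D by simp
  thus ?thesis using P PP PP' dg DXP unfolding D_def by auto
qed

lemma gram_diag:
  assumes N: "N \<in> carrier_mat m n" and k: "k < n"
  shows "(adj_mat N * N) $$ (k,k) = complex_of_real (\<Sum>i<m. (cmod (N $$ (i,k)))^2)"
proof -
  have "(adj_mat N * N) $$ (k,k) = (\<Sum>i<m. cnj (N $$ (i,k)) * N $$ (i,k))"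
    using N k by (simp add: scalar_prod_def atLeast0LessThan)
  also have "\<dots> = (\<Sum>i<m. complex_of_real ((cmod (N $$ (i,k)))^2))"
    apply (rule sum.cong, simp) using complex_norm_square by (metis mult.commute)
  finally show ?thesis by simp
qed

lemma gram_diag_re:
  assumes N: "N \<in> carrier_mat m n" and k: "k < n"
  shows "Re ((adj_mat N * N) $$ (k,k)) = (\<Sum>i<m. (cmod (N $$ (i,k)))^2)"
  using gram_diag[OF assms] by simp

lemma mtrace_mult:
  assumes A: "A \<in> carrier_mat n n" and B: "B \<in> carrier_mat n n"
  shows "mtrace (A * B) = (\<Sum>k<n. \<Sum>i<n. A $$ (i,k) * B $$ (k,i))"
proof -
  have "mtrace (A * B) = (\<Sum>i<n. \<Sum>k<n. A $$ (i,k) * B $$ (k,i))"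
    unfolding mtrace_def using A B by (simp add: scalar_prod_def atLeast0LessThan)
  also have "\<dots> = (\<Sum>k<n. \<Sum>i<n. A $$ (i,k) * B $$ (k,i))" by (rule sum.swap)
  finally show ?thesis .
qed

lemma cs_bound:
  fixes a b :: "nat \<Rightarrow> real"
  assumes fin: "finite I" and sa: "(\<Sum>i\<in>I. (a i)^2) \<le> s" and sb: "(\<Sum>i\<in>I. (b i)^2) \<le> 1"
  shows "(\<Sum>i\<in>I. \<bar>a i\<bar> * \<bar>b i\<bar>) \<le> sqrt s"
proof (cases "s > 0")
  case True
  define t where "t = sqrt s"
  have t: "t > 0" "t * t = s" using True unfolding t_def by (auto simp: real_sqrt_mult_self)
  have pt: "\<bar>a i\<bar> * \<bar>b i\<bar> \<le> ((a i)^2 / t + t * (b i)^2) / 2" for i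
  proof -
    have "0 \<le> (\<bar>a i\<bar> - t * \<bar>b i\<bar>)^2 / t" using t by simp
    also have "(\<bar>a i\<bar> - t * \<bar>b i\<bar>)^2 / t = (a i)^2 / t + t * (b i)^2 - 2 * (\<bar>a i\<bar> * \<bar>b i\<bar>)"
      using t by (simp add: power2_eq_square field_simps)
    finally show ?thesis by simp
  qed
  have "(\<Sum>i\<in>I. \<bar>a i\<bar> * \<bar>b i\<bar>) \<le> (\<Sum>i\<in>I. ((a i)^2 / t + t * (b i)^2) / 2)"
    by (rule sum_mono) (rule pt)
  also have "\<dots> = ((\<Sum>i\<in>I. (a i)^2) / t + t * (\<Sum>i\<in>I. (b i)^2)) / 2"
    by (simp add: sum_divide_distrib[symmetric] sum.distrib sum_distrib_left)
  also have "\<dots> \<le> (s / t + t * 1) / 2"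
    using sa sb t by (intro divide_right_mono add_mono mult_left_mono divide_right_mono) auto
  also have "\<dots> = t" using t by (simp add: field_simps)
  finally show ?thesis unfolding t_def .
next
  case False
  have "(\<Sum>i\<in>I. (a i)^2) \<ge> 0" by (intro sum_nonneg) auto
  hence z: "(\<Sum>i\<in>I. (a i)^2) = 0" using sa False by linarith
  hence "\<forall>i\<in>I. (a i)^2 = 0"
    using sum_nonneg_eq_0_iff[OF fin, of "\<lambda>i. (a i)^2"] by simp
  hence "(\<Sum>i\<in>I. \<bar>a i\<bar> * \<bar>b i\<bar>) = 0" by simp
  thus ?thesis using z sa by simp
qed


lemma adj_minus: "A \<in> carrier_mat m n \<Longrightarrow> B \<in> carrier_mat m n \<Longrightarrow> adj_mat (A - B) = adj_mat A - adj_mat B"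
  by (rule eq_matI) auto

lemma lemB:
  assumes X: "X \<in> carrier_mat n n" and V: "V \<in> carrier_mat n n" and U: "U \<in> carrier_mat n n"
    and VVV: "V * adj_mat V * V = V" and UU: "U * adj_mat U = 1\<^sub>m n"
  shows "Re (mtrace (adj_mat V * X * U)) \<le> trace_norm X"
proof -
  from tn_formula[OF X] obtain P where P: "P \<in> carrier_mat n n" and PP: "adj_mat P * P = 1\<^sub>m n"
    and PP': "P * adj_mat P = 1\<^sub>m n"
    and tn: "trace_norm X = (\<Sum>k<n. sqrt (Re ((adj_mat (X * P) * (X * P)) $$ (k,k))))" by blast
  define M where "M = X * P"
  have M: "M \<in> carrier_mat n n" unfolding M_def using X P by simp
  define s where "s = (\<lambda>k. Re ((adj_mat M * M) $$ (k,k)))"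
  have aV: "adj_mat V \<in> carrier_mat n n" and aP: "adj_mat P \<in> carrier_mat n n"
    and aU: "adj_mat U \<in> carrier_mat n n" and aM: "adj_mat M \<in> carrier_mat n n" using V P U M by auto
  define B where "B = adj_mat V * M"
  define C where "C = adj_mat P * U"
  have B: "B \<in> carrier_mat n n" unfolding B_def using aV M by simp
  have C: "C \<in> carrier_mat n n" unfolding C_def using aP U by simp
  have eq1: "adj_mat V * X * U = B * C"
  proof -
    have "P * (adj_mat P * U) = U" using assoc_mult_mat[OF P aP U] PP' U by simp
    thus ?thesis unfolding B_def C_def M_def using aV X P aP U
      by (simp add: assoc_mult_mat[of _ n n _ n _ n])
  qed
  have CC: "C * adj_mat C = 1\<^sub>m n"
  proof -
    have "adj_mat C = adj_mat U * P" unfolding C_def using adj_mult[OF aP U] by simp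
    hence "C * adj_mat C = adj_mat P * (U * (adj_mat U * P))" unfolding C_def
      using aP U aU P by (simp add: assoc_mult_mat[of _ n n _ n _ n])
    also have "U * (adj_mat U * P) = P" using assoc_mult_mat[OF U aU P] UU P by simp
    finally show ?thesis using PP by simp
  qed
  have Cbound: "(\<Sum>i<n. (cmod (C $$ (k,i)))^2) \<le> 1" if k: "k < n" for k
  proof -
    have aC: "adj_mat C \<in> carrier_mat n n" using C by simp
    have "Re ((adj_mat (adj_mat C) * adj_mat C) $$ (k,k)) = (\<Sum>i<n. (cmod (adj_mat C $$ (i,k)))^2)"
      by (rule gram_diag_re[OF aC k])
    also have "\<dots> = (\<Sum>i<n. (cmod (C $$ (k,i)))^2)" using C k by (intro sum.cong) auto
    finally show ?thesis using CC k by simp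
  qed
  define Q where "Q = V * adj_mat V"
  have Q: "Q \<in> carrier_mat n n" unfolding Q_def using V aV by simp
  have aQ: "adj_mat Q = Q" unfolding Q_def using adj_mult[OF V aV] by simp
  have QQ: "Q * Q = Q"
  proof -
    have "Q * Q = (V * adj_mat V * V) * adj_mat V" unfolding Q_def using V aV
      by (simp add: assoc_mult_mat[of _ n n _ n _ n])
    thus ?thesis using VVV Q_def by simp
  qed
  define R where "R = 1\<^sub>m n - Q"
  have R: "R \<in> carrier_mat n n" unfolding R_def using Q by (intro minus_carrier_mat) auto
  have aR: "adj_mat R = R" unfolding R_def using adj_minus[OF one_carrier_mat Q] aQ by simp
  have QR: "Q * R = 0\<^sub>m n n" unfolding R_def
    using mult_minus_distrib_mat[OF Q one_carrier_mat Q] QQ Q by simp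
  have RR: "R * R = R"
  proof -
    have e: "(1\<^sub>m n - Q) * R = 1\<^sub>m n * R - Q * R" by (rule minus_mult_distrib_mat[OF one_carrier_mat Q R])
    have "R * R = 1\<^sub>m n * R - Q * R" using e unfolding R_def[symmetric] .
    also have "\<dots> = R" using QR R by (intro eq_matI) auto
    finally show ?thesis .
  qed
  have QplusR: "Q + R = 1\<^sub>m n" unfolding R_def using Q by (intro eq_matI) auto
  define N where "N = R * M"
  have N: "N \<in> carrier_mat n n" unfolding N_def using R M by simp
  have decomp: "adj_mat M * M = adj_mat B * B + adj_mat N * N"
  proof -
    have aB: "adj_mat B = adj_mat M * V" unfolding B_def using adj_mult[OF aV M] by simp
    have aN: "adj_mat N = adj_mat M * R" unfolding N_def using adj_mult[OF R M] aR by simp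
    have "adj_mat B * B = adj_mat M * V * (adj_mat V * M)" using aB B_def by simp
    hence 1: "adj_mat B * B = adj_mat M * Q * M" unfolding Q_def using aM V aV M
      by (simp add: assoc_mult_mat[of _ n n _ n _ n])
    have "adj_mat N * N = adj_mat M * R * (R * M)" using aN N_def by simp
    hence "adj_mat N * N = adj_mat M * (R * R) * M" using aM R M
      by (simp add: assoc_mult_mat[of _ n n _ n _ n])
    hence 2: "adj_mat N * N = adj_mat M * R * M" using RR by simp
    have "adj_mat M * M = adj_mat M * (Q + R) * M" using QplusR aM by (simp add: right_mult_one_mat[OF aM])
    also have "\<dots> = (adj_mat M * Q + adj_mat M * R) * M" using mult_add_distrib_mat[OF aM Q R] by simp
    also have "\<dots> = adj_mat M * Q * M + adj_mat M * R * M"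
      by (rule add_mult_distrib_mat) (use aM Q R M in auto)
    finally show ?thesis using 1 2 by simp
  qed
  have Bbound: "(\<Sum>i<n. (cmod (B $$ (i,k)))^2) \<le> s k" if k: "k < n" for k
  proof -
    have "s k = Re ((adj_mat B * B) $$ (k,k)) + Re ((adj_mat N * N) $$ (k,k))"
      unfolding s_def decomp using B N k by simp
    moreover have "Re ((adj_mat N * N) $$ (k,k)) \<ge> 0" unfolding gram_diag_re[OF N k]
      by (intro sum_nonneg) auto
    ultimately show ?thesis unfolding gram_diag_re[OF B k] by simp
  qed
  have "Re (mtrace (adj_mat V * X * U)) \<le> cmod (mtrace (B * C))" unfolding eq1 by (rule complex_Re_le_cmod)
  also have "\<dots> = cmod (\<Sum>k<n. \<Sum>i<n. B $$ (i,k) * C $$ (k,i))" using mtrace_mult[OF B C] by simp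
  also have "\<dots> \<le> (\<Sum>k<n. cmod (\<Sum>i<n. B $$ (i,k) * C $$ (k,i)))" by (rule norm_sum)
  also have "\<dots> \<le> (\<Sum>k<n. (\<Sum>i<n. \<bar>cmod (B $$ (i,k))\<bar> * \<bar>cmod (C $$ (k,i))\<bar>))"
    by (intro sum_mono) (auto intro: order.trans[OF norm_sum] simp: norm_mult)
  also have "\<dots> \<le> (\<Sum>k<n. sqrt (s k))"
    by (intro sum_mono cs_bound) (auto intro: Bbound Cbound simp: power2_abs)
  also have "\<dots> = trace_norm X" unfolding tn s_def M_def ..
  finally show ?thesis .
qed


definition dm :: "nat \<Rightarrow> (nat \<Rightarrow> complex) \<Rightarrow> complex mat" where
  "dm n f = mat n n (\<lambda>(i,j). if i = j then f i else 0)"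

lemma dm_carrier[simp]: "dm n f \<in> carrier_mat n n" unfolding dm_def by simp
lemma dm_index[simp]: "i < n \<Longrightarrow> j < n \<Longrightarrow> dm n f $$ (i,j) = (if i = j then f i else 0)"
  unfolding dm_def by simp
lemma dm_dims[simp]: "dim_row (dm n f) = n" "dim_col (dm n f) = n" unfolding dm_def by simp_all

lemma dm_mult[simp]: "dm n f * dm n h = dm n (\<lambda>k. f k * h k)"
proof (rule eq_matI)
  fix i j assume "i < dim_row (dm n (\<lambda>k. f k * h k))" "j < dim_col (dm n (\<lambda>k. f k * h k))"
  hence i: "i < n" and j: "j < n" by auto
  have "(dm n f * dm n h) $$ (i,j) = (\<Sum>k\<in>{0..<n}. (if i = k then f i else 0) * (if k = j then h k else 0))"
    using i j by (simp add: scalar_prod_def)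
  also have "\<dots> = (\<Sum>k\<in>{0..<n}. if k = i then (if i = j then f i * h i else 0) else 0)"
    by (rule sum.cong) auto
  also have "\<dots> = (if i = j then f i * h i else 0)" using i by simp
  finally show "(dm n f * dm n h) $$ (i,j) = dm n (\<lambda>k. f k * h k) $$ (i,j)" using i j by simp
qed auto

lemma adj_dm_real: "adj_mat (dm n (\<lambda>k. complex_of_real (f k))) = dm n (\<lambda>k. complex_of_real (f k))"
  by (rule eq_matI) auto

lemma mtrace_dm: "mtrace (dm n f) = (\<Sum>k<n. f k)"
  unfolding mtrace_def by simp

lemma lemA:
  assumes Z: "Z \<in> carrier_mat n n"
  shows "\<exists>V U. V \<in> carrier_mat n n \<and> U \<in> carrier_mat n n \<and> V * adj_mat V * V = V \<and>
    U * adj_mat U = 1\<^sub>m n \<and> Re (mtrace (adj_mat V * Z * U)) = trace_norm Z"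
proof -
  from tn_formula[OF Z] obtain P where P: "P \<in> carrier_mat n n" and PP: "adj_mat P * P = 1\<^sub>m n"
    and PP': "P * adj_mat P = 1\<^sub>m n" and dg: "diagonal_mat (adj_mat (Z * P) * (Z * P))"
    and tn: "trace_norm Z = (\<Sum>k<n. sqrt (Re ((adj_mat (Z * P) * (Z * P)) $$ (k,k))))" by blast
  define M where "M = Z * P"
  have M: "M \<in> carrier_mat n n" unfolding M_def using Z P by simp
  have aM: "adj_mat M \<in> carrier_mat n n" using M by simp
  define s where "s = (\<lambda>k. Re ((adj_mat M * M) $$ (k,k)))"
  have s0: "s k \<ge> 0" if "k < n" for k unfolding s_def gram_diag_re[OF M that] by (intro sum_nonneg) auto
  have D: "adj_mat M * M = dm n (\<lambda>k. complex_of_real (s k))"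
  proof (rule eq_matI)
    fix i j assume "i < dim_row (dm n (\<lambda>k. complex_of_real (s k)))" "j < dim_col (dm n (\<lambda>k. complex_of_real (s k)))"
    hence i: "i < n" and j: "j < n" by auto
    show "(adj_mat M * M) $$ (i,j) = dm n (\<lambda>k. complex_of_real (s k)) $$ (i,j)"
    proof (cases "i = j")
      case True
      thus ?thesis using i gram_diag[OF M i] unfolding s_def by simp
    next
      case False
      thus ?thesis using dg i j M unfolding diagonal_mat_def M_def by auto
    qed
  qed (use M in auto)
  define g where "g = (\<lambda>k. 1 / sqrt (s k))"
  define G where "G = dm n (\<lambda>k. complex_of_real (g k))"
  have G: "G \<in> carrier_mat n n" unfolding G_def by simp
  have aG: "adj_mat G = G" unfolding G_def by (rule adj_dm_real)
  define V where "V = M * G"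
  have V: "V \<in> carrier_mat n n" unfolding V_def using M G by simp
  have aV: "adj_mat V = G * adj_mat M" unfolding V_def using adj_mult[OF M G] aG by simp
  have h1: "adj_mat M * (M * G) = dm n (\<lambda>k. complex_of_real (s k)) * G"
    using assoc_mult_mat[OF aM M G] D by simp
  have gsg: "complex_of_real (g k) * (complex_of_real (g k) * (complex_of_real (s k) * complex_of_real (g k)))
      = complex_of_real (g k)" if k: "k < n" for k
  proof (cases "s k = 0")
    case True thus ?thesis unfolding g_def by simp
  next
    case False
    hence "s k > 0" using s0[OF k] by simp
    hence "g k * (g k * (s k * g k)) = g k"
    proof -
      assume pos: "s k > 0"
      define r where "r = sqrt (s k)"
      have r: "r > 0" "s k = r * r" using pos unfolding r_def by (auto simp: real_sqrt_mult_self)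
      have "1 / r * (1 / r * (s k * (1 / r))) = 1 / r" using r by simp
      thus ?thesis unfolding g_def r_def[symmetric] .
    qed
    hence "complex_of_real (g k * (g k * (s k * g k))) = complex_of_real (g k)" by (rule arg_cong[where f=complex_of_real])
    thus ?thesis by (simp only: of_real_mult)
  qed
  have "V * adj_mat V * V = (M * G) * (G * adj_mat M) * (M * G)" using aV V_def by simp
  also have "\<dots> = M * (G * (G * (adj_mat M * (M * G))))"
    using M G aM by (simp add: assoc_mult_mat[of _ n n _ n _ n])
  also have "\<dots> = M * G" unfolding h1 unfolding G_def dm_mult
  proof -
    have "dm n (\<lambda>k. complex_of_real (g k) * (complex_of_real (g k) * (complex_of_real (s k) * complex_of_real (g k))))
      = dm n (\<lambda>k. complex_of_real (g k))"
      unfolding dm_def by (rule eq_matI) (auto simp: gsg)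
    thus "M * dm n (\<lambda>k. complex_of_real (g k) * (complex_of_real (g k) * (complex_of_real (s k) * complex_of_real (g k))))
      = M * dm n (\<lambda>k. complex_of_real (g k))" by simp
  qed
  finally have VVV: "V * adj_mat V * V = V" unfolding V_def .
  have "adj_mat V * Z * P = G * adj_mat M * Z * P" using aV by simp
  also have "\<dots> = G * (adj_mat M * M)"
    using G Z P aM unfolding M_def[symmetric] by (simp add: assoc_mult_mat[of _ n n _ n _ n] M_def)
  also have "\<dots> = dm n (\<lambda>k. complex_of_real (g k * s k))" unfolding D G_def by simp
  finally have "Re (mtrace (adj_mat V * Z * P)) = (\<Sum>k<n. g k * s k)" by (simp add: mtrace_dm)
  also have "\<dots> = (\<Sum>k<n. sqrt (s k))"
  proof (rule sum.cong)
    fix k assume "k \<in> {..<n}"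
    hence "s k \<ge> 0" using s0 by simp
    show "g k * s k = sqrt (s k)"
    proof (cases "s k = 0")
      case True thus ?thesis unfolding g_def by simp
    next
      case False
      define r where "r = sqrt (s k)"
      have r: "r > 0" "s k = r * r" using False \<open>s k \<ge> 0\<close> unfolding r_def by (auto simp: real_sqrt_mult_self)
      have "1 / r * s k = r" using r by simp
      thus ?thesis unfolding g_def r_def[symmetric] .
    qed
  qed simp
  also have "\<dots> = trace_norm Z" unfolding tn s_def M_def ..
  finally have fin: "Re (mtrace (adj_mat V * Z * P)) = trace_norm Z" .
  show ?thesis
    apply (rule exI[of _ V], rule exI[of _ P])
    using V P PP' VVV fin by (intro conjI)
qed


lemma lin_comb_carrier: "(\<forall>i<k. x i \<in> carrier_mat d d) \<Longrightarrow> lin_comb d c x k \<in> carrier_mat d d"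
  by (induction k) auto

lemma L_zero:
  assumes L: "linear_op_map d d' L"
  shows "L (0\<^sub>m d d) = 0\<^sub>m d' d'"
proof -
  have z: "(0::complex) \<cdot>\<^sub>m 0\<^sub>m d d = 0\<^sub>m d d" by (rule eq_matI) auto
  have c: "L (0\<^sub>m d d) \<in> carrier_mat d' d'" using L unfolding linear_op_map_def by auto
  have h: "L ((0::complex) \<cdot>\<^sub>m 0\<^sub>m d d) = 0 \<cdot>\<^sub>m L (0\<^sub>m d d)"
    using L zero_carrier_mat unfolding linear_op_map_def by blast
  have "L (0\<^sub>m d d) = 0 \<cdot>\<^sub>m L (0\<^sub>m d d)" using h unfolding z .
  also have "\<dots> = 0\<^sub>m d' d'" using c by (intro eq_matI) auto
  finally show ?thesis .
qed

lemma L_lin_comb: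
  assumes L: "linear_op_map d d' L"
  shows "(\<forall>i<k. x i \<in> carrier_mat d d) \<Longrightarrow> L (lin_comb d c x k) = lin_comb d' c (\<lambda>i. L (x i)) k"
proof (induction k)
  case 0 thus ?case using L_zero[OF L] by simp
next
  case (Suc k)
  have lc: "lin_comb d c x k \<in> carrier_mat d d" using Suc.prems by (intro lin_comb_carrier) auto
  have xk: "x k \<in> carrier_mat d d" using Suc.prems by auto
  have sm: "complex_of_real (c k) \<cdot>\<^sub>m x k \<in> carrier_mat d d" using xk by simp
  have "L (lin_comb d c x (Suc k)) = L (lin_comb d c x k) + L (complex_of_real (c k) \<cdot>\<^sub>m x k)"
    using L lc sm unfolding linear_op_map_def by simp
  also have "L (complex_of_real (c k) \<cdot>\<^sub>m x k) = complex_of_real (c k) \<cdot>\<^sub>m L (x k)"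
    using L xk unfolding linear_op_map_def by simp
  finally show ?case using Suc by simp
qed

lemma lin_comb_const:
  assumes T: "T \<in> carrier_mat n n"
  shows "lin_comb n c (\<lambda>_. T) k = complex_of_real (\<Sum>i<k. c i) \<cdot>\<^sub>m T"
proof (induction k)
  case 0 show ?case using T by (intro eq_matI) auto
next
  case (Suc k) show ?case unfolding lin_comb.simps Suc using T by (intro eq_matI) (auto simp: distrib_right)
qed

lemma trace_formula:
  assumes V: "V \<in> carrier_mat n n" and U: "U \<in> carrier_mat n n" and Y: "Y \<in> carrier_mat n n"
  shows "mtrace (adj_mat V * Y * U) = (\<Sum>i<n. \<Sum>l<n. (\<Sum>j<n. cnj (V $$ (j,i)) * Y $$ (j,l)) * U $$ (l,i))"
  unfolding mtrace_def using V U Y by (simp add: scalar_prod_def atLeast0LessThan)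

definition lf :: "nat \<Rightarrow> complex mat \<Rightarrow> complex mat \<Rightarrow> complex mat \<Rightarrow> real" where
  "lf n V U Y = Re (\<Sum>i<n. \<Sum>l<n. (\<Sum>j<n. cnj (V $$ (j,i)) * Y $$ (j,l)) * U $$ (l,i))"

lemma lf_add: "A \<in> carrier_mat n n \<Longrightarrow> B \<in> carrier_mat n n \<Longrightarrow> lf n V U (A + B) = lf n V U A + lf n V U B"
proof -
  assume A: "A \<in> carrier_mat n n" and B: "B \<in> carrier_mat n n"
  have "(\<Sum>i<n. \<Sum>l<n. (\<Sum>j<n. cnj (V $$ (j,i)) * (A + B) $$ (j,l)) * U $$ (l,i))
    = (\<Sum>i<n. \<Sum>l<n. (\<Sum>j<n. cnj (V $$ (j,i)) * A $$ (j,l)) * U $$ (l,i) + (\<Sum>j<n. cnj (V $$ (j,i)) * B $$ (j,l)) * U $$ (l,i))"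
    using A B by (intro sum.cong refl) (auto simp: distrib_left distrib_right sum.distrib)
  thus ?thesis unfolding lf_def by (simp add: sum.distrib)
qed

lemma lf_minus: "A \<in> carrier_mat n n \<Longrightarrow> B \<in> carrier_mat n n \<Longrightarrow> lf n V U (A - B) = lf n V U A - lf n V U B"
proof -
  assume A: "A \<in> carrier_mat n n" and B: "B \<in> carrier_mat n n"
  have "(\<Sum>i<n. \<Sum>l<n. (\<Sum>j<n. cnj (V $$ (j,i)) * (A - B) $$ (j,l)) * U $$ (l,i))
    = (\<Sum>i<n. \<Sum>l<n. (\<Sum>j<n. cnj (V $$ (j,i)) * A $$ (j,l)) * U $$ (l,i) - (\<Sum>j<n. cnj (V $$ (j,i)) * B $$ (j,l)) * U $$ (l,i))"
    using A B by (intro sum.cong refl) (auto simp: right_diff_distrib left_diff_distrib sum_subtractf)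
  thus ?thesis unfolding lf_def by (simp add: sum_subtractf)
qed

lemma lf_smult: "A \<in> carrier_mat n n \<Longrightarrow> lf n V U (complex_of_real r \<cdot>\<^sub>m A) = r * lf n V U A"
proof -
  assume A: "A \<in> carrier_mat n n"
  have "(\<Sum>i<n. \<Sum>l<n. (\<Sum>j<n. cnj (V $$ (j,i)) * (complex_of_real r \<cdot>\<^sub>m A) $$ (j,l)) * U $$ (l,i))
    = complex_of_real r * (\<Sum>i<n. \<Sum>l<n. (\<Sum>j<n. cnj (V $$ (j,i)) * A $$ (j,l)) * U $$ (l,i))"
    unfolding sum_distrib_left
    using A by (intro sum.cong refl) (auto simp: sum_distrib_left sum_distrib_right mult_ac)
  thus ?thesis unfolding lf_def by simp
qed

lemma lf_zero: "lf n V U (0\<^sub>m n n) = 0"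
  unfolding lf_def by simp

lemma lf_lin_comb:
  "(\<forall>i<k. x i \<in> carrier_mat n n) \<Longrightarrow> lf n V U (lin_comb n c x k) = (\<Sum>i<k. c i * lf n V U (x i))"
proof (induction k)
  case 0 thus ?case by (simp add: lf_zero)
next
  case (Suc k)
  have lc: "lin_comb n c x k \<in> carrier_mat n n" using Suc.prems by (intro lin_comb_carrier) auto
  have xk: "x k \<in> carrier_mat n n" using Suc.prems by auto
  show ?case using Suc lf_add[OF lc smult_carrier_mat[OF xk]] lf_smult[OF xk] by simp
qed

lemma trace_norm_sym:
  assumes A: "A \<in> carrier_mat n n" and B: "B \<in> carrier_mat n n"
  shows "trace_norm (A - B) = trace_norm (B - A)"
proof -
  have "adj_mat (A - B) * (A - B) = adj_mat (B - A) * (B - A)"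
  proof (rule eq_matI)
    fix i j assume "i < dim_row (adj_mat (B - A) * (B - A))" "j < dim_col (adj_mat (B - A) * (B - A))"
    hence i: "i < n" and j: "j < n" using A B by auto
    have "(adj_mat (A - B) * (A - B)) $$ (i,j) = (\<Sum>k\<in>{0..<n}. cnj (A $$ (k,i) - B $$ (k,i)) * (A $$ (k,j) - B $$ (k,j)))"
      using A B i j by (simp add: scalar_prod_def)
    also have "\<dots> = (\<Sum>k\<in>{0..<n}. cnj (B $$ (k,i) - A $$ (k,i)) * (B $$ (k,j) - A $$ (k,j)))"
      by (intro sum.cong refl) (simp add: algebra_simps)
    also have "\<dots> = (adj_mat (B - A) * (B - A)) $$ (i,j)"
      using A B i j by (simp add: scalar_prod_def)
    finally show "(adj_mat (A - B) * (A - B)) $$ (i,j) = (adj_mat (B - A) * (B - A)) $$ (i,j)" .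
  qed (use A B in auto)
  thus ?thesis unfolding trace_norm_def by simp
qed


lemma lin_comb_cong: "(\<forall>i<k. x i = x' i) \<Longrightarrow> lin_comb d c x k = lin_comb d c x' k"
  by (induction k) auto

lemma density_carrier: "\<rho> \<in> density_ops d \<Longrightarrow> \<rho> \<in> carrier_mat d d"
  unfolding density_ops_def by auto

theorem theorem1:
  fixes d d' :: nat and \<epsilon> :: real and \<rho>' \<tau>' :: "complex mat"
    and \<P> \<E> :: "complex mat set"
  assumes "0 \<le> \<epsilon>" and "\<epsilon> < 1"
    and "\<rho>' \<in> density_ops d'" and "\<tau>' \<in> density_ops d'"
    and "\<P> \<subseteq> density_ops d" and "\<E> \<subseteq> density_ops d"
    and "conv_mat d \<P> \<inter> aff_mat d \<E> \<noteq> {}"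
  shows "(\<exists>L. linear_op_map d d' L \<and>
            (\<forall>\<rho>\<in>\<P>. \<forall>\<tau>\<in>\<E>. trace_dist (L \<rho>) \<rho>' \<le> \<epsilon> \<and> L \<tau> = \<tau>'))
         \<longleftrightarrow> \<epsilon> \<ge> trace_dist \<rho>' \<tau>'"
proof -
  have r': "\<rho>' \<in> carrier_mat d' d'" and t': "\<tau>' \<in> carrier_mat d' d'"
    using assms(3,4) density_carrier by auto
  have Pc: "\<And>\<rho>. \<rho> \<in> \<P> \<Longrightarrow> \<rho> \<in> carrier_mat d d" using assms(5) density_carrier by auto
  have Ec: "\<And>\<rho>. \<rho> \<in> \<E> \<Longrightarrow> \<rho> \<in> carrier_mat d d" using assms(6) density_carrier by auto
  from assms(7) obtain M where Mc: "M \<in> conv_mat d \<P>" and Ma: "M \<in> aff_mat d \<E>" by auto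
  from Mc obtain k c x where x: "\<forall>i<k. x i \<in> \<P> \<and> c i \<ge> 0" and c1: "(\<Sum>i<k. c i) = 1"
    and Mx: "M = lin_comb d c x k" unfolding conv_mat_def by blast
  from Ma obtain k' c' y where y: "\<forall>i<k'. y i \<in> \<E>" and c1': "(\<Sum>i<k'. c' i) = 1"
    and My: "M = lin_comb d c' y k'" unfolding aff_mat_def by blast
  have k0: "k > 0" using c1 by (cases k) auto
  have k0': "k' > 0" using c1' by (cases k') auto
  have sym: "trace_dist \<tau>' \<rho>' = trace_dist \<rho>' \<tau>'"
    unfolding trace_dist_def using trace_norm_sym[OF t' r'] by simp
  show ?thesis
  proof
    assume "\<exists>L. linear_op_map d d' L \<and> (\<forall>\<rho>\<in>\<P>. \<forall>\<tau>\<in>\<E>. trace_dist (L \<rho>) \<rho>' \<le> \<epsilon> \<and> L \<tau> = \<tau>')"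
    then obtain L where L: "linear_op_map d d' L"
      and LL: "\<forall>\<rho>\<in>\<P>. \<forall>\<tau>\<in>\<E>. trace_dist (L \<rho>) \<rho>' \<le> \<epsilon> \<and> L \<tau> = \<tau>'" by blast
    have y0: "y 0 \<in> \<E>" using y k0' by auto
    have x0: "x 0 \<in> \<P>" using x k0 by auto
    have Lr: "\<And>\<rho>. \<rho> \<in> \<P> \<Longrightarrow> trace_dist (L \<rho>) \<rho>' \<le> \<epsilon>" using LL y0 by blast
    have Lt: "\<And>\<tau>. \<tau> \<in> \<E> \<Longrightarrow> L \<tau> = \<tau>'" using LL x0 by blast
    have Lc: "\<And>X. X \<in> carrier_mat d d \<Longrightarrow> L X \<in> carrier_mat d' d'" using L unfolding linear_op_map_def by blast
    have xc: "\<forall>i<k. x i \<in> carrier_mat d d" using x Pc by blast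
    have yc: "\<forall>i<k'. y i \<in> carrier_mat d d" using y Ec by blast
    have "L M = lin_comb d' c' (\<lambda>i. L (y i)) k'" unfolding My by (rule L_lin_comb[OF L yc])
    also have "\<dots> = lin_comb d' c' (\<lambda>_. \<tau>') k'" by (rule lin_comb_cong) (use y Lt in auto)
    also have "\<dots> = \<tau>'" unfolding lin_comb_const[OF t'] c1' using t' by (intro eq_matI) auto
    finally have LMt: "L M = \<tau>'" .
    have LMx: "L M = lin_comb d' c (\<lambda>i. L (x i)) k" unfolding Mx by (rule L_lin_comb[OF L xc])
    have Lxc: "\<forall>i<k. L (x i) \<in> carrier_mat d' d'" using xc Lc by blast
    define Z where "Z = \<tau>' - \<rho>'"
    have Z: "Z \<in> carrier_mat d' d'" unfolding Z_def using r' by (intro minus_carrier_mat)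
    from lemA[OF Z] obtain V U where V: "V \<in> carrier_mat d' d'" and U: "U \<in> carrier_mat d' d'"
      and VVV: "V * adj_mat V * V = V" and UU: "U * adj_mat U = 1\<^sub>m d'"
      and tZ: "Re (mtrace (adj_mat V * Z * U)) = trace_norm Z" by blast
    let ?f = "lf d' V U"
    have fre: "\<And>Y. Y \<in> carrier_mat d' d' \<Longrightarrow> ?f Y = Re (mtrace (adj_mat V * Y * U))"
      unfolding lf_def using trace_formula[OF V U] by simp
    have bnd: "?f (L (x i)) - ?f \<rho>' \<le> 2 * \<epsilon>" if i: "i < k" for i
    proof -
      have A: "L (x i) - \<rho>' \<in> carrier_mat d' d'" using r' by (intro minus_carrier_mat)
      have "?f (L (x i)) - ?f \<rho>' = ?f (L (x i) - \<rho>')" using lf_minus Lxc i r' by simp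
      also have "\<dots> = Re (mtrace (adj_mat V * (L (x i) - \<rho>') * U))" using fre[OF A] .
      also have "\<dots> \<le> trace_norm (L (x i) - \<rho>')" by (rule lemB[OF A V U VVV UU])
      also have "\<dots> = 2 * trace_dist (L (x i)) \<rho>'" unfolding trace_dist_def by simp
      also have "\<dots> \<le> 2 * \<epsilon>" using Lr x i by auto
      finally show ?thesis .
    qed
    have "trace_norm Z = ?f Z" using tZ fre[OF Z] by simp
    also have "\<dots> = ?f \<tau>' - ?f \<rho>'" unfolding Z_def using lf_minus t' r' by simp
    also have "?f \<tau>' = (\<Sum>i<k. c i * ?f (L (x i)))" unfolding LMt[symmetric] LMx using lf_lin_comb Lxc by simp
    also have "?f \<rho>' = (\<Sum>i<k. c i * ?f \<rho>')" using c1 by (simp add: sum_distrib_right[symmetric])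
    also have "(\<Sum>i<k. c i * ?f (L (x i))) - (\<Sum>i<k. c i * ?f \<rho>') = (\<Sum>i<k. c i * (?f (L (x i)) - ?f \<rho>'))"
      by (simp add: sum_subtractf right_diff_distrib)
    also have "\<dots> \<le> (\<Sum>i<k. c i * (2 * \<epsilon>))"
      by (intro sum_mono mult_left_mono) (use bnd x in auto)
    also have "\<dots> = 2 * \<epsilon>" using c1 by (simp add: sum_distrib_right[symmetric])
    finally have "trace_norm Z \<le> 2 * \<epsilon>" .
    hence "trace_dist \<tau>' \<rho>' \<le> \<epsilon>" unfolding trace_dist_def Z_def by simp
    thus "\<epsilon> \<ge> trace_dist \<rho>' \<tau>'" using sym by simp
  next
    assume eps: "\<epsilon> \<ge> trace_dist \<rho>' \<tau>'"
    define L where "L = (\<lambda>X. mtrace X \<cdot>\<^sub>m \<tau>')"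
    have mt_add: "mtrace (X + Y) = mtrace X + mtrace Y" if "X \<in> carrier_mat d d" "Y \<in> carrier_mat d d" for X Y
      using that unfolding mtrace_def by (simp add: sum.distrib)
    have mt_sm: "mtrace (a \<cdot>\<^sub>m X) = a * mtrace X" if "X \<in> carrier_mat d d" for X a
      using that unfolding mtrace_def by (simp add: sum_distrib_left)
    have lin: "linear_op_map d d' L" unfolding linear_op_map_def L_def
    proof (intro conjI ballI allI)
      fix X :: "complex mat" assume "X \<in> carrier_mat d d"
      show "mtrace X \<cdot>\<^sub>m \<tau>' \<in> carrier_mat d' d'" using t' by simp
    next
      fix X Y :: "complex mat" assume X: "X \<in> carrier_mat d d" and Y: "Y \<in> carrier_mat d d"
      show "mtrace (X + Y) \<cdot>\<^sub>m \<tau>' = mtrace X \<cdot>\<^sub>m \<tau>' + mtrace Y \<cdot>\<^sub>m \<tau>'"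
        unfolding mt_add[OF X Y] by (rule add_smult_distrib_right_mat[OF t'])
    next
      fix a :: complex and X :: "complex mat" assume X: "X \<in> carrier_mat d d"
      show "mtrace (a \<cdot>\<^sub>m X) \<cdot>\<^sub>m \<tau>' = a \<cdot>\<^sub>m (mtrace X \<cdot>\<^sub>m \<tau>')"
        unfolding mt_sm[OF X] using t' by (intro eq_matI) auto
    qed
    have L1: "L X = \<tau>'" if "X \<in> density_ops d" for X
    proof -
      have "mtrace X = 1" using that unfolding density_ops_def by auto
      thus ?thesis unfolding L_def using t' by (intro eq_matI) auto
    qed
    show "\<exists>L. linear_op_map d d' L \<and> (\<forall>\<rho>\<in>\<P>. \<forall>\<tau>\<in>\<E>. trace_dist (L \<rho>) \<rho>' \<le> \<epsilon> \<and> L \<tau> = \<tau>')"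
    proof (intro exI[of _ L] conjI ballI)
      show "linear_op_map d d' L" by (rule lin)
    next
      fix \<rho> \<tau> assume r: "\<rho> \<in> \<P>" and t: "\<tau> \<in> \<E>"
      show "trace_dist (L \<rho>) \<rho>' \<le> \<epsilon>" using L1[of \<rho>] r assms(5) sym eps by auto
      show "L \<tau> = \<tau>'" using L1[of \<tau>] t assms(6) by auto
    qed
  qed
qed

end
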